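(* Let $\alpha\in(0,1)$, $\mu\in\mathbb{R}$, $\sigma\ge 0$, and let $\mathcal{P}$ be the set of all probability distributions $\mathbb{P}$ on $\mathbb{R}$ (with finite second moment) under which a real random variable $\xi$ has mean $\mathbb{E}_{\mathbb{P}}[\xi]=\mu$ and variance $\mathbb{D}_{\mathbb{P}}[\xi]=\sigma^2$. For $\Theta\in\mathbb{R}$ and $\theta^0\in\mathbb{R}$, consider the affine loss $\phi(\xi)=\Theta\xi+\theta^0$. Then the worst-case conditional value-at-risk $$\sup_{\mathbb{P}\in\mathcal{P}}\ \mathbb{P}\text{-}\mathrm{CVaR}_\alpha\big(\phi(\xi)\big)$$ equals the optimal value of the second-order cone program $$\inf_{\beta,e,q,z,s\in\mathbb{R}}\ \beta+\frac{1}{1-\alpha}(e+s)$$ subject to $$e-\theta^0+\beta+q-\Theta\mu-z>0,\qquad e\ge 0,\qquad z>0,\qquad \left\|\begin{pmatrix} q\\ \Theta\sigma\\ z-s\end{pmatrix}\right\|_2\le z+s.$$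
   Context: For a distribution $\mathbb{P}$ and an integrable random variable $X$, the conditional value-at-risk at level $\alpha\in(0,1)$ is $\mathbb{P}\text{-}\mathrm{CVaR}_\alpha(X)=\inf_{\beta\in\mathbb{R}}\big\{\beta+\frac{1}{1-\alpha}\mathbb{E}_{\mathbb{P}}[(X-\beta)^+]\big\}$, where $(x)^+=\max\{x,0\}$. $\|\cdot\|_2$ denotes the Euclidean norm on $\mathbb{R}^3$; $\beta,e,q,z,s$ are auxiliary scalar decision variables. *)

theory Defs
  imports "HOL-Probability.Probability"
begin

text \<open>Conditional value-at-risk of the random variable X (a real function on the sample
  space of M) at level alpha, via the Rockafellar--Uryasev formula.\<close>
definition CVaR :: "real measure \<Rightarrow> real \<Rightarrow> (real \<Rightarrow> real) \<Rightarrow> real" where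
  "CVaR M \<alpha> X = (INF \<beta>::real. \<beta> + (1 / (1 - \<alpha>)) * (\<integral>x. max (X x - \<beta>) 0 \<partial>M))"

text \<open>Probability distributions on the real line (Borel sets) with finite second moment,
  under which xi (the identity) has mean mu and variance sigma squared.\<close>
definition moment_set :: "real \<Rightarrow> real \<Rightarrow> real measure set" where
  "moment_set \<mu> \<sigma> = {P. prob_space P \<and> sets P = sets borel \<and>
      integrable P (\<lambda>x. x\<^sup>2) \<and> integrable P (\<lambda>x. x) \<and>
      (\<integral>x. x \<partial>P) = \<mu> \<and> (\<integral>x. (x - \<mu>)\<^sup>2 \<partial>P) = \<sigma>\<^sup>2}"

definition socp_feasible :: "real \<Rightarrow> real \<Rightarrow> real \<Rightarrow> real \<Rightarrow> (real \<times> real \<times> real \<times> real \<times> real) set" where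
  "socp_feasible \<Theta> \<theta>0 \<mu> \<sigma> = {(\<beta>, e, q, z, s).
      e - \<theta>0 + \<beta> + q - \<Theta> * \<mu> - z > 0 \<and> e \<ge> 0 \<and> z > 0 \<and>
      norm (vector [q, \<Theta> * \<sigma>, z - s] :: real^3) \<le> z + s}"

end

theory Submission
  imports Defs
begin


lemma norm3: "norm (vector [a, b, d] :: real^3) = sqrt (a^2 + b^2 + d^2)"
  by (simp add: norm_vec_def L2_set_def sum_3)

lemma integrable_pos: assumes P: "prob_space P" and X: "integrable P X" shows "integrable P (\<lambda>x. max (X x - (b::real)) 0)"
proof -
  interpret prob_space P by fact
  show ?thesis
  apply (rule Bochner_Integration.integrable_max)
  apply (rule Bochner_Integration.integrable_diff)
  apply (rule X)
  apply auto
  done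
qed

lemma cvar_bdd:
  fixes X :: "'a \<Rightarrow> real" and \<alpha> \<beta> :: real
  assumes P: "prob_space P" and X: "integrable P X" and a: "0 < \<alpha>" "\<alpha> < 1"
  shows "(\<integral>x. X x \<partial>P) \<le> \<beta> + (1 / (1 - \<alpha>)) * (\<integral>x. max (X x - \<beta>) 0 \<partial>P)"
proof -
  interpret prob_space P by fact
  have i1: "integrable P (\<lambda>x. max (X x - \<beta>) 0)" by (rule integrable_pos[OF P X])
  have "(\<integral>x. X x - \<beta> \<partial>P) \<le> (\<integral>x. max (X x - \<beta>) 0 \<partial>P)"
    by (rule integral_mono) (use X i1 in auto)
  moreover have "(\<integral>x. X x - \<beta> \<partial>P) = (\<integral>x. X x \<partial>P) - \<beta>"
    using X by (simp add: prob_space)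
  moreover have "0 \<le> (\<integral>x. max (X x - \<beta>) 0 \<partial>P)" by simp
  moreover have "1 \<le> 1 / (1 - \<alpha>)" using a by simp
  ultimately show ?thesis using a
    by (smt (verit) mult_left_mono mult_right_mono mult_cancel_right1)
qed


lemma l1: fixes C k a :: real assumes "C > 0" "k > 0" "0<a" "a<1" "k^2 = a/(1-a)"
  shows "C/(2*(1-a)*k) * a = C*k/2"
proof -
  have "C/(2*(1-a)*k) * a = C/(2*k) * (a/(1-a))" by simp
  also have "\<dots> = C/(2*k) * k^2" using assms by simp
  also have "\<dots> = C*k/2" using assms(2) by (simp add: power2_eq_square)
  finally show ?thesis .
qed
lemma l2: fixes C k a :: real assumes "C > 0" "k > 0" "0<a" "a<1"
  shows "C^2/(4*(C/(2*(1-a)*k))*(1-a)) = C*k/2"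
proof -
  have "4*(C/(2*(1-a)*k))*(1-a) = 2*C/k" using assms by (simp add: field_simps)
  then show ?thesis using assms by (simp add: power2_eq_square)
qed

lemma l3: fixes z s q c :: real assumes "z > 0" "s = (q^2+c^2)/(4*z)"
  shows "q^2+c^2+(z-s)^2 = (z+s)^2"
proof -
  have "4*z* s = q^2+c^2" using assms by simp
  moreover have "(z+s)^2 = (z-s)^2 + 4*z* s" by (simp add: power2_eq_square algebra_simps)
  ultimately show ?thesis by simp
qed
lemma l4: fixes z s q c a m \<eta> :: real assumes "z > 0" "0<a" "a<1" "q = 2*z*(1-a)" "s = (q^2+c^2)/(4*z)"
  shows "(m + z - q + \<eta>) + 1/(1-a)*(0+s) = m + \<eta> + (z*a + c^2/(4*z*(1-a)))"
proof -
  have "q^2 = 4*z*(z*(1-a)^2)" using assms(4) by (simp add: power2_eq_square)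
  then have "s = z*(1-a)^2 + c^2/(4*z)" using assms(1,5) by (simp add: add_divide_distrib)
  then have "1/(1-a)*(0+s) = z*(1-a) + c^2/(4*z*(1-a))" using assms(2,3)
    by (simp add: power2_eq_square distrib_left)
  then show ?thesis using assms(4) by (simp add: algebra_simps)
qed


lemma moment_quad:
  assumes P: "P \<in> moment_set \<mu> \<sigma>"
  shows "integrable P (\<lambda>x. a*x^2 + b*x + c)"
    "(\<integral>x. a*x^2 + b*x + c \<partial>P) = a*(\<sigma>^2+\<mu>^2) + b*\<mu> + c"
proof -
  have ps: "prob_space P" and i2: "integrable P (\<lambda>x. x^2)" and i1: "integrable P (\<lambda>x. x)"
    and m: "(\<integral>x. x \<partial>P) = \<mu>" and v: "(\<integral>x. (x - \<mu>)\<^sup>2 \<partial>P) = \<sigma>\<^sup>2"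
    using P by (auto simp: moment_set_def)
  interpret prob_space P by fact
  have gen: "integrable P (\<lambda>x. a*x^2 + b*x + c) \<and> (\<integral>x. a*x^2 + b*x + c \<partial>P) = a*(\<integral>x. x^2 \<partial>P) + b*\<mu> + c" for a b c
  proof -
    have ia: "integrable P (\<lambda>x. a*x^2)" using i2 by simp
    have ib: "integrable P (\<lambda>x. b*x)" using i1 by simp
    have iab: "integrable P (\<lambda>x. a*x^2 + b*x)" using ia ib by (rule Bochner_Integration.integrable_add)
    have ic: "integrable P (\<lambda>x. c)" by simp
    have "(\<integral>x. a*x^2 + b*x + c \<partial>P) = (\<integral>x. a*x^2 + b*x \<partial>P) + c"
      using iab ic by (simp add: Bochner_Integration.integral_add prob_space)
    also have "(\<integral>x. a*x^2 + b*x \<partial>P) = (\<integral>x. a*x^2 \<partial>P) + (\<integral>x. b*x \<partial>P)"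
      using ia ib by (rule Bochner_Integration.integral_add)
    finally show ?thesis using iab ic m by (simp add: Bochner_Integration.integrable_add)
  qed
  have "(\<integral>x. (x - \<mu>)\<^sup>2 \<partial>P) = (\<integral>x. 1*x^2 + (-2*\<mu>)*x + \<mu>^2 \<partial>P)"
    by (rule Bochner_Integration.integral_cong) (auto simp: power2_eq_square algebra_simps)
  also have "\<dots> = (\<integral>x. x^2 \<partial>P) - 2*\<mu>^2 + \<mu>^2" using gen[of 1 "-2*\<mu>" "\<mu>^2"] by (simp add: power2_eq_square)
  finally have e2: "(\<integral>x. x^2 \<partial>P) = \<sigma>^2 + \<mu>^2" using v by simp
  show "integrable P (\<lambda>x. a*x^2 + b*x + c)" using gen by blast
  show "(\<integral>x. a*x^2 + b*x + c \<partial>P) = a*(\<sigma>^2+\<mu>^2) + b*\<mu> + c" using gen e2 by simp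
qed

lemma sqrt_le_sq: assumes "sqrt A \<le> B" "0 \<le> A" shows "A \<le> B^2" "0 \<le> B"
proof -
  show "0 \<le> B" using assms real_sqrt_ge_zero order_trans by blast
  have "(sqrt A)^2 \<le> B^2" using assms by (intro power_mono) auto
  then show "A \<le> B^2" using assms by simp
qed

lemma weak:
  assumes P: "P \<in> moment_set \<mu> \<sigma>" and F: "(\<beta>, e, q, z, s) \<in> socp_feasible \<Theta> \<theta>0 \<mu> \<sigma>"
    and a: "0 < \<alpha>" "\<alpha> < 1"
  shows "CVaR P \<alpha> (\<lambda>\<xi>. \<Theta> * \<xi> + \<theta>0) \<le> \<beta> + (1 / (1 - \<alpha>)) * (e + s)"
proof -
  have ps: "prob_space P" using P by (auto simp: moment_set_def)
  have c1: "e - \<theta>0 + \<beta> + q - \<Theta> * \<mu> - z > 0" and e0: "e \<ge> 0" and z0: "z > 0"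
    and nrm: "sqrt (q^2 + (\<Theta>*\<sigma>)^2 + (z-s)^2) \<le> z + s"
    using F by (auto simp: socp_feasible_def norm3)
  have "q^2 + (\<Theta>*\<sigma>)^2 + (z-s)^2 \<le> (z+s)^2" using sqrt_le_sq(1)[OF nrm] by simp
  then have qs: "q^2 + (\<Theta>*\<sigma>)^2 \<le> 4*z* s" by (simp add: power2_eq_square algebra_simps)
  define X :: "real \<Rightarrow> real" where "X = (\<lambda>\<xi>. \<Theta> * \<xi> + \<theta>0)"
  have iX: "integrable P X" using moment_quad(1)[OF P, of 0 \<Theta> \<theta>0] by (simp add: X_def)
  let ?f = "\<lambda>b. b + (1 / (1 - \<alpha>)) * (\<integral>x. max (X x - b) 0 \<partial>P)"
  have bdd: "bdd_below (range ?f)"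
    using cvar_bdd[OF ps iX a] by (intro bdd_belowI2) 
  have cv: "CVaR P \<alpha> X \<le> ?f \<beta>" unfolding CVaR_def by (rule cINF_lower[OF bdd]) simp
  define A where "A = \<Theta>^2/(4*z)"
  define B where "B = (2*q*\<Theta> - 2*\<Theta>^2*\<mu>)/(4*z)"
  define C where "C = e + (\<Theta>*\<mu> - q)^2/(4*z)"
  have pw: "max (X x - \<beta>) 0 \<le> A*x^2 + B*x + C" for x
  proof -
    have eq: "A*x^2 + B*x + C = e + (\<Theta>*(x-\<mu>)+q)^2/(4*z)"
      using z0 by (simp add: A_def B_def C_def field_simps power2_eq_square; simp add: algebra_simps)
    have "(\<Theta>*(x-\<mu>)+q) - z \<le> (\<Theta>*(x-\<mu>)+q)^2/(4*z)"
    proof -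
      have "0 \<le> ((\<Theta>*(x-\<mu>)+q) - 2*z)^2" by simp
      then show ?thesis using z0 by (simp add: field_simps power2_eq_square; simp add: algebra_simps)
    qed
    moreover have "0 \<le> (\<Theta>*(x-\<mu>)+q)^2/(4*z)" using z0 by simp
    ultimately show ?thesis unfolding eq X_def using c1 e0 by (simp add: algebra_simps)
  qed
  have "(\<integral>x. max (X x - \<beta>) 0 \<partial>P) \<le> (\<integral>x. A*x^2 + B*x + C \<partial>P)"
    by (rule integral_mono[OF integrable_pos[OF ps iX] moment_quad(1)[OF P] pw])
  also have "\<dots> = A*(\<sigma>^2+\<mu>^2) + B*\<mu> + C" by (rule moment_quad(2)[OF P])
  also have "\<dots> = e + (q^2 + (\<Theta>*\<sigma>)^2)/(4*z)"
    using z0 by (simp add: A_def B_def C_def field_simps power2_eq_square; simp add: algebra_simps)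
  also have "\<dots> \<le> e + s" using qs z0 by (simp add: field_simps)
  finally have "(\<integral>x. max (X x - \<beta>) 0 \<partial>P) \<le> e + s" .
  then have "?f \<beta> \<le> \<beta> + (1 / (1 - \<alpha>)) * (e + s)" using a by (simp add: divide_right_mono)
  with cv show ?thesis by (simp add: X_def)
qed



lemma kfacts:
  assumes a: "0 < \<alpha>" "\<alpha> < 1"
  shows "sqrt (\<alpha>/(1-\<alpha>)) > 0" "(sqrt (\<alpha>/(1-\<alpha>)))^2 = \<alpha>/(1-\<alpha>)"
  using a by auto

lemma worst:
  assumes a: "0 < \<alpha>" "\<alpha> < 1" and sg: "\<sigma> \<ge> 0"
  shows "\<exists>P \<in> moment_set \<mu> \<sigma>. \<Theta>*\<mu>+\<theta>0 + \<bar>\<Theta>*\<sigma>\<bar> * sqrt (\<alpha>/(1-\<alpha>)) \<le> CVaR P \<alpha> (\<lambda>\<xi>. \<Theta> * \<xi> + \<theta>0)"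
proof -
  define k where "k = sqrt (\<alpha>/(1-\<alpha>))"
  have k0: "k > 0" and k2: "k^2 = \<alpha>/(1-\<alpha>)" using kfacts[OF a] by (auto simp: k_def)
  define t :: real where "t = (if \<Theta> \<ge> 0 then 1 else -1)"
  have t2: "t^2 = 1" by (simp add: t_def)
  have tT: "\<Theta> * t = \<bar>\<Theta>\<bar>" by (simp add: t_def)
  define g where "g = (\<lambda>b. if b then \<mu> - t*\<sigma>/k else \<mu> + t*\<sigma>*k)"
  define M where "M = measure_pmf (bernoulli_pmf \<alpha>)"
  define P where "P = distr M borel g"
  have gm: "g \<in> measurable M borel" by (simp add: M_def)
  have ps: "prob_space P" unfolding P_def M_def
    by (rule prob_space.prob_space_distr[OF prob_space_measure_pmf]) simp
  have fin: "finite (set_pmf (bernoulli_pmf \<alpha>))" by simp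
  have int: "integrable P f" if "f \<in> borel_measurable borel" for f :: "real \<Rightarrow> real"
    unfolding P_def using that gm
    by (subst integrable_distr_eq) (auto simp: M_def intro!: integrable_measure_pmf_finite)
  have intg: "(\<integral>x. f x \<partial>P) = \<alpha> * f (g True) + (1-\<alpha>) * f (g False)"
    if "f \<in> borel_measurable borel" for f :: "real \<Rightarrow> real"
    unfolding P_def using that gm a
    by (subst integral_distr) (auto simp: M_def)
  have "(1-\<alpha>)*k = \<alpha>/k" using k0 k2 a by (simp add: field_simps power2_eq_square)
  then have h: "\<sigma>*t*((1-\<alpha>)*k) = \<sigma>*t*(\<alpha>/k)" by simp
  have "\<alpha> * g True + (1-\<alpha>) * g False = \<mu> + (\<sigma>*t*((1-\<alpha>)*k) - \<sigma>*t*(\<alpha>/k))"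
    by (simp add: g_def algebra_simps)
  then have mean: "\<alpha> * g True + (1-\<alpha>) * g False = \<mu>" using h by simp
  have "\<alpha> * (g True - \<mu>)^2 + (1-\<alpha>) * (g False - \<mu>)^2 = t^2*\<sigma>^2*(\<alpha>/k^2 + (1-\<alpha>)*k^2)"
    using k0 by (simp add: g_def field_simps power2_eq_square)
  also have "\<alpha>/k^2 + (1-\<alpha>)*k^2 = 1"
  proof -
    have "\<alpha>/k^2 = 1-\<alpha>" unfolding k2 using a by (simp add: field_simps)
    moreover have "(1-\<alpha>)*k^2 = \<alpha>" using k2 a by (simp add: field_simps)
    ultimately show ?thesis by simp
  qed
  finally have var: "\<alpha> * (g True - \<mu>)^2 + (1-\<alpha>) * (g False - \<mu>)^2 = \<sigma>^2" using t2 by simp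
  have sP: "sets P = sets borel" by (simp add: P_def)
  have PM: "P \<in> moment_set \<mu> \<sigma>"
    unfolding moment_set_def using ps mean var sP
    by (simp add: intg int)
  define X where "X = (\<lambda>\<xi>. \<Theta> * \<xi> + \<theta>0)"
  define V where "V = \<Theta>*\<mu>+\<theta>0 + \<bar>\<Theta>*\<sigma>\<bar> * k"
  have XF: "X (g False) = V" unfolding X_def V_def g_def using sg
    by (simp add: abs_mult algebra_simps tT[symmetric])
  have "V \<le> CVaR P \<alpha> X" unfolding CVaR_def
  proof (rule cINF_greatest)
    fix b
    have "(\<integral>x. max (X x - b) 0 \<partial>P) = \<alpha> * max (X (g True) - b) 0 + (1-\<alpha>) * max (X (g False) - b) 0"
      by (rule intg) (simp add: X_def)
    also have "\<dots> \<ge> (1-\<alpha>) * (V - b)" using a XF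
      by (smt (verit) max.cobounded1 max.cobounded2 mult_left_mono mult_nonneg_nonneg)
    finally have "(1-\<alpha>) * (V - b) \<le> (\<integral>x. max (X x - b) 0 \<partial>P)" .
    then have "V - b \<le> (1 / (1 - \<alpha>)) * (\<integral>x. max (X x - b) 0 \<partial>P)" using a
      by (simp add: field_simps)
    then show "V \<le> b + (1 / (1 - \<alpha>)) * (\<integral>x. max (X x - b) 0 \<partial>P)" by simp
  qed simp
  then show ?thesis using PM unfolding V_def X_def k_def by blast
qed



lemma approx:
  assumes a: "0 < \<alpha>" "\<alpha> < 1" and ep: "\<epsilon> > 0"
  shows "\<exists>p \<in> socp_feasible \<Theta> \<theta>0 \<mu> \<sigma>. (case p of (\<beta>, e, q, z, s) \<Rightarrow> \<beta> + (1 / (1 - \<alpha>)) * (e + s))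
           < \<Theta>*\<mu>+\<theta>0 + \<bar>\<Theta>*\<sigma>\<bar> * sqrt (\<alpha>/(1-\<alpha>)) + \<epsilon>"
proof -
  define k where "k = sqrt (\<alpha>/(1-\<alpha>))"
  have k0: "k > 0" and k2: "k^2 = \<alpha>/(1-\<alpha>)" using kfacts[OF a] by (auto simp: k_def)
  define c where "c = \<Theta>*\<sigma>"
  define m where "m = \<Theta>*\<mu>+\<theta>0"
  define z where "z = (if c = 0 then \<epsilon>/(4*\<alpha>) else \<bar>c\<bar>/(2*(1-\<alpha>)*k))"
  have z0: "z > 0" using a ep k0 by (simp add: z_def)
  have zv: "z*\<alpha> + c^2/(4*z*(1-\<alpha>)) \<le> \<bar>c\<bar>*k + \<epsilon>/4"
  proof (cases "c = 0")
    case True then show ?thesis using a by (simp add: z_def)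
  next
    case False
    have C0: "\<bar>c\<bar> > 0" using False by simp
    have "z*\<alpha> = \<bar>c\<bar>*k/2" using l1[OF C0 k0 a k2] False by (simp add: z_def)
    moreover have "c^2/(4*z*(1-\<alpha>)) = \<bar>c\<bar>*k/2" using l2[OF C0 k0 a] False by (simp add: z_def)
    ultimately show ?thesis using ep by linarith
  qed
  define q where "q = 2*z*(1-\<alpha>)"
  define s where "s = (q^2 + c^2)/(4*z)"
  define \<beta> where "\<beta> = m + z - q + \<epsilon>/2"
  have s0: "s \<ge> 0" using z0 by (simp add: s_def)
  have "q^2 + c^2 + (z-s)^2 = (z+s)^2" using l3[OF z0 s_def] .
  then have nrm: "sqrt (q^2 + c^2 + (z-s)^2) = z + s" using z0 s0 by simp
  have F: "(\<beta>, 0, q, z, s) \<in> socp_feasible \<Theta> \<theta>0 \<mu> \<sigma>"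
    using z0 ep nrm by (simp add: socp_feasible_def norm3 \<beta>_def m_def c_def)
  have "\<beta> + (1 / (1 - \<alpha>)) * (0 + s) = m + \<epsilon>/2 + (z*\<alpha> + c^2/(4*z*(1-\<alpha>)))"
    unfolding \<beta>_def by (rule l4[OF z0 a q_def s_def])
  also have "\<dots> < m + \<bar>c\<bar>*k + \<epsilon>" using zv ep by simp
  finally show ?thesis using F unfolding m_def[symmetric] c_def[symmetric] k_def[symmetric] by (intro bexI[OF _ F]) simp
qed


theorem lemma1:
  fixes \<alpha> \<mu> \<sigma> \<Theta> \<theta>0 :: real
  assumes "0 < \<alpha>" and "\<alpha> < 1" and "\<sigma> \<ge> 0"
  shows "(SUP P \<in> moment_set \<mu> \<sigma>. CVaR P \<alpha> (\<lambda>\<xi>. \<Theta> * \<xi> + \<theta>0))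
       = (INF (\<beta>, e, q, z, s) \<in> socp_feasible \<Theta> \<theta>0 \<mu> \<sigma>. \<beta> + (1 / (1 - \<alpha>)) * (e + s))"
proof -
  have a: "0 < \<alpha>" "\<alpha> < 1" using assms by auto
  define V where "V = \<Theta>*\<mu>+\<theta>0 + \<bar>\<Theta>*\<sigma>\<bar> * sqrt (\<alpha>/(1-\<alpha>))"
  define obj :: "real\<times>real\<times>real\<times>real\<times>real \<Rightarrow> real" where "obj = (\<lambda>(\<beta>, e, q, z, s). \<beta> + (1 / (1 - \<alpha>)) * (e + s::real))"
  define F where "F = socp_feasible \<Theta> \<theta>0 \<mu> \<sigma>"
  define X where "X = (\<lambda>\<xi>. \<Theta> * \<xi> + (\<theta>0::real))"
  have R: "(INF (\<beta>, e, q, z, s) \<in> socp_feasible \<Theta> \<theta>0 \<mu> \<sigma>. \<beta> + (1 / (1 - \<alpha>)) * (e + s)) = (INF p \<in> F. obj p)"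
    unfolding obj_def F_def by simp
  have W: "CVaR P \<alpha> X \<le> obj p" if "P \<in> moment_set \<mu> \<sigma>" "p \<in> F" for P p
    using weak[OF that(1) _ a] that(2) unfolding obj_def F_def X_def by (cases p) auto
  obtain Ps where Ps: "Ps \<in> moment_set \<mu> \<sigma>" and PsV: "V \<le> CVaR Ps \<alpha> X"
    using worst[OF a assms(3)] unfolding V_def X_def by blast
  obtain p0 where p0: "p0 \<in> F" using approx[OF a zero_less_one] unfolding F_def by blast
  have FnE: "F \<noteq> {}" using p0 by blast
  have MnE: "moment_set \<mu> \<sigma> \<noteq> {}" using Ps by blast
  have bddF: "bdd_below (obj ` F)" using W[OF Ps] by (intro bdd_belowI2)
  have bddM: "bdd_above ((\<lambda>P. CVaR P \<alpha> X) ` moment_set \<mu> \<sigma>)" using W[OF _ p0] by (intro bdd_aboveI2)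
  have "(INF p \<in> F. obj p) \<le> V"
  proof (rule field_le_epsilon)
    fix e :: real assume e0: "0 < e"
    obtain p where "p \<in> F" "obj p < V + e" using approx[OF a e0] unfolding F_def obj_def V_def by blast
    then show "(INF p \<in> F. obj p) \<le> V + e" using cINF_lower[OF bddF] by fastforce
  qed
  moreover have "V \<le> (SUP P \<in> moment_set \<mu> \<sigma>. CVaR P \<alpha> X)"
    using PsV cSUP_upper[OF Ps bddM] by linarith
  moreover have "(SUP P \<in> moment_set \<mu> \<sigma>. CVaR P \<alpha> X) \<le> (INF p \<in> F. obj p)"
    by (rule cSUP_least[OF MnE], rule cINF_greatest[OF FnE], rule W)
  ultimately show ?thesis unfolding R X_def by linarith
qed

end
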